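(* Let $\kappa$ be an infinite cardinal, $(G,f)\in\mathcal C$ with $G=(V,E)$ and $|V|=\kappa^+$. Then $G$ possesses a perfect $f$-factor if and only if there is an increasing continuous sequence $(A_\alpha)_{\alpha<\kappa^+}$ of subsets of $V$ such that (i) $A_0=\emptyset$ and $V=\bigcup_{\alpha<\kappa^+}A_\alpha$; (ii) $|A_{\alpha+1}\setminus A_\alpha|=\kappa$ for all $\alpha<\kappa^+$; (iii) for every $\alpha<\kappa^+$, letting $B_\alpha=A_{\alpha+1}\setminus(A_\alpha\setminus f^{-1}(\kappa^+))$ and $g_\alpha=f\restriction B_\alpha$, the graph $\bigl(B_\alpha,\{\{x,y\}\in E: x\in B_\alpha,\ y\in A_{\alpha+1}\setminus A_\alpha\}\bigr)$ has a $\kappa$-perfect $g_\alpha$-factor.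
   Context: A graph is $G=(V,E)$ with $V$ a nonempty set and $E\subseteq\{e\subseteq V:|e|=2\}$. For $F\subseteq E$ and $x\in V$, $d_F(x)$ is the cardinal $|\{e\in F:x\in e\}|$. For $f:V\to$ Cardinals, an $f$-factor of $G$ is $F\subseteq E$ with $d_F(x)\le f(x)$ for all $x$; it is perfect if $d_F(x)=f(x)$ for all $x$; $f^{-1}(\lambda)=\{x\in V:f(x)=\lambda\}$. For an infinite cardinal $\kappa$, an $f$-factor $F$ is $\kappa$-perfect if $d_F(x)=f(x)$ for all $x$ with $f(x)\le\kappa$ and $d_F(x)>0$ for all $x$ with $f(x)>\kappa$. $\mathcal C$ is the class of all pairs $(G,f)$ with $G=(V,E)$ a graph, $f:V\to$ Cardinals, and $f(x)\le d_E(x)$ for all $x\in V$. A sequence $(A_\alpha)_{\alpha<\kappa^+}$ is increasing continuous if $A_\alpha\subseteq A_\beta$ for $\alpha<\beta$ and $A_\lambda=\bigcup_{\alpha<\lambda}A_\alpha$ for limit $\lambda$. *)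

theory Defs
  imports Main
begin

unbundle cardinal_syntax

text \<open>A cardinal-valued function f on vertices is represented by f :: 'a => 'b set,
  the value at x being the cardinal |f x|.\<close>

definition is_graph :: "'a set \<Rightarrow> 'a set set \<Rightarrow> bool" where
  "is_graph V E \<longleftrightarrow> V \<noteq> {} \<and> (\<forall>e\<in>E. e \<subseteq> V \<and> (\<exists>x y. x \<noteq> y \<and> e = {x, y}))"

definition edges_at :: "'a set set \<Rightarrow> 'a \<Rightarrow> 'a set set" where
  "edges_at F x = {e \<in> F. x \<in> e}"

definition in_class_C :: "'a set \<Rightarrow> 'a set set \<Rightarrow> ('a \<Rightarrow> 'b set) \<Rightarrow> bool" where
  "in_class_C V E f \<longleftrightarrow> is_graph V E \<and> (\<forall>x\<in>V. |f x| \<le>o |edges_at E x| )"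

definition is_f_factor :: "'a set \<Rightarrow> 'a set set \<Rightarrow> ('a \<Rightarrow> 'b set) \<Rightarrow> 'a set set \<Rightarrow> bool" where
  "is_f_factor V E f F \<longleftrightarrow> F \<subseteq> E \<and> (\<forall>x\<in>V. |edges_at F x| \<le>o |f x| )"

definition is_perfect_f_factor :: "'a set \<Rightarrow> 'a set set \<Rightarrow> ('a \<Rightarrow> 'b set) \<Rightarrow> 'a set set \<Rightarrow> bool" where
  "is_perfect_f_factor V E f F \<longleftrightarrow> is_f_factor V E f F \<and> (\<forall>x\<in>V. |edges_at F x| =o |f x| )"

definition is_kappa_perfect_f_factor ::
  "'k rel \<Rightarrow> 'a set \<Rightarrow> 'a set set \<Rightarrow> ('a \<Rightarrow> 'b set) \<Rightarrow> 'a set set \<Rightarrow> bool" where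
  "is_kappa_perfect_f_factor kappa V E f F \<longleftrightarrow> is_f_factor V E f F \<and>
     (\<forall>x\<in>V. |f x| \<le>o kappa \<longrightarrow> |edges_at F x| =o |f x| ) \<and>
     (\<forall>x\<in>V. kappa <o |f x| \<longrightarrow> edges_at F x \<noteq> {})"

text \<open>Order-theoretic notions for a well-order W (used with W = cardSuc kappa,
  whose field is the set of ordinals below kappa^+).\<close>

definition wo_less :: "'i rel \<Rightarrow> 'i \<Rightarrow> 'i \<Rightarrow> bool" where
  "wo_less W a b \<longleftrightarrow> (a, b) \<in> W \<and> a \<noteq> b"

definition wo_is_zero :: "'i rel \<Rightarrow> 'i \<Rightarrow> bool" where
  "wo_is_zero W z \<longleftrightarrow> z \<in> Field W \<and> (\<forall>a\<in>Field W. (z, a) \<in> W)"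

definition wo_is_succ :: "'i rel \<Rightarrow> 'i \<Rightarrow> 'i \<Rightarrow> bool" where
  "wo_is_succ W a b \<longleftrightarrow> a \<in> Field W \<and> wo_less W a b \<and> (\<forall>c. wo_less W a c \<longrightarrow> (b, c) \<in> W)"

definition wo_is_limit :: "'i rel \<Rightarrow> 'i \<Rightarrow> bool" where
  "wo_is_limit W l \<longleftrightarrow> l \<in> Field W \<and> \<not> wo_is_zero W l \<and> \<not> (\<exists>a. wo_is_succ W a l)"

definition increasing_continuous :: "'i rel \<Rightarrow> ('i \<Rightarrow> 'a set) \<Rightarrow> bool" where
  "increasing_continuous W A \<longleftrightarrow>
     (\<forall>a b. wo_less W a b \<longrightarrow> A a \<subseteq> A b) \<and>
     (\<forall>l. wo_is_limit W l \<longrightarrow> A l = (\<Union>a\<in>{a. wo_less W a l}. A a))"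

end

theory Submission
  imports Defs
begin



lemma wo_min:
  assumes "Well_order r" "S \<subseteq> Field r" "S \<noteq> {}"
  shows "\<exists>m\<in>S. \<forall>c\<in>S. (m,c) \<in> r"
  using assms wo_rel.minim_in[of r S] wo_rel.minim_least[of r S] unfolding wo_rel_def by blast

locale thm3 =
  fixes kappa :: "'k rel" and V :: "'a set" and E :: "'a set set" and f :: "'a \<Rightarrow> 'b set"
  assumes co: "Card_order kappa" and inf: "\<not> finite (Field kappa)"
    and C: "in_class_C V E f" and VW: "|V| =o cardSuc kappa"
begin

abbreviation "W \<equiv> cardSuc kappa"

lemma W_co: "Card_order W" using co cardSuc_Card_order by blast
lemma W_wo: "Well_order W" using W_co card_order_on_well_order_on by blast
lemma W_worel: "wo_rel W" using W_wo wo_rel_def by blast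
lemma kW: "kappa <o W" using co cardSuc_greater by blast
lemma W_inf: "\<not> finite (Field W)" using co inf cardSuc_finite by blast
lemma k_wo: "Well_order kappa" using co card_order_on_well_order_on by blast

lemma edge_form: assumes "e \<in> E" shows "\<exists>u w. u \<noteq> w \<and> e = {u,w} \<and> u \<in> V \<and> w \<in> V"
proof -
  have "e \<subseteq> V" "\<exists>x y. x \<noteq> y \<and> e = {x, y}" using C assms unfolding in_class_C_def is_graph_def by auto
  then show ?thesis by auto
qed

lemma edge_sub: "e \<in> E \<Longrightarrow> e \<subseteq> V"
  using C unfolding in_class_C_def is_graph_def by auto

lemma edges_at_img: assumes "F \<subseteq> E" shows "edges_at F x \<subseteq> (\<lambda>y. {x,y}) ` {y. {x,y} \<in> F}"
proof
  fix e assume "e \<in> edges_at F x"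
  hence e: "e \<in> F" "x \<in> e" unfolding edges_at_def by auto
  then obtain u w where uw: "e = {u,w}" using edge_form assms by blast
  define y where "y = (if u = x then w else u)"
  have ey: "e = {x, y}" using e uw unfolding y_def by auto
  show "e \<in> (\<lambda>y. {x,y}) ` {y. {x,y} \<in> F}"
    by (rule image_eqI[where x=y]) (use ey e in auto)
qed

lemma edges_at_V: assumes "F \<subseteq> E" shows "|edges_at F x| \<le>o |V|"
proof -
  have "{y. {x,y} \<in> F} \<subseteq> V" using assms edge_sub by auto
  hence "edges_at F x \<subseteq> (\<lambda>y. {x,y}) ` V" using edges_at_img[OF assms, of x] by (meson image_mono subset_trans)
  hence "|edges_at F x| \<le>o |(\<lambda>y. {x,y}) ` V|" by (rule card_of_mono1)
  thus ?thesis using card_of_image ordLeq_transitive by blast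
qed

lemma edges_at_W: "F \<subseteq> E \<Longrightarrow> |edges_at F x| \<le>o W"
  using ordLeq_ordIso_trans[OF edges_at_V VW] .

lemma f_le_W: "x \<in> V \<Longrightarrow> |f x| \<le>o W"
  using C ordLeq_transitive[OF _ edges_at_W[of E x]] unfolding in_class_C_def by blast

lemma high_iff: assumes "x \<in> V" shows "(\<not> |f x| \<le>o kappa) \<longleftrightarrow> |f x| =o W"
proof
  assume "\<not> |f x| \<le>o kappa"
  hence "kappa <o |f x|" using not_ordLeq_iff_ordLess[OF k_wo card_of_Well_order] by blast
  hence "W \<le>o |f x|" using cardSuc_ordLess_ordLeq[OF co card_of_Card_order] by blast
  thus "|f x| =o W" using f_le_W assms ordIso_iff_ordLeq by blast
next
  assume "|f x| =o W"
  thus "\<not> |f x| \<le>o kappa" using kW ordIso_ordLeq_trans not_ordLess_ordLeq ordIso_symmetric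
    by (meson not_ordLess_ordIso ordLeq_ordLess_trans)
qed

lemma high_iff2: "(\<not> |f x| \<le>o kappa) \<longleftrightarrow> kappa <o |f x|"
  using not_ordLeq_iff_ordLess[OF k_wo card_of_Well_order] .

lemma underS_le: "|underS W a| \<le>o kappa"
proof (cases "a \<in> Field W")
  case True
  hence "|underS W a| <o W" using card_of_underS[OF W_co] by blast
  thus ?thesis using cardSuc_ordLeq_ordLess[OF co card_of_Card_order] by blast
next
  case False
  hence "underS W a = {}" unfolding underS_def Field_def by auto
  thus ?thesis using ordLeq_ordIso_trans[OF card_of_empty card_of_Field_ordIso[OF co]] by simp
qed

lemma le_kappa_Un: "|A| \<le>o kappa \<Longrightarrow> |B| \<le>o kappa \<Longrightarrow> |A \<union> B| \<le>o kappa"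
  using card_of_Un_ordLeq_infinite_Field[OF inf _ _ co] by blast

lemma le_kappa_UN: "|I| \<le>o kappa \<Longrightarrow> (\<And>i. i \<in> I \<Longrightarrow> |A i| \<le>o kappa) \<Longrightarrow> |\<Union>i\<in>I. A i| \<le>o kappa"
  using card_of_UNION_ordLeq_infinite_Field[OF inf co, of I A] by blast

lemma nat_le_kappa: "|UNIV :: nat set| \<le>o kappa"
  using ordLeq_ordIso_trans[OF iffD1[OF infinite_iff_card_of_nat inf] card_of_Field_ordIso[OF co]] .

lemma singl_le_kappa: "|{a}| \<le>o kappa"
proof -
  obtain b where "b \<in> Field kappa" using inf by (metis finite.emptyI ex_in_conv)
  hence "|{a}| \<le>o |Field kappa|" using card_of_ordLeqI[of "\<lambda>_. b" "{a}"] by auto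
  thus ?thesis using ordLeq_ordIso_trans[OF _ card_of_Field_ordIso[OF co]] by blast
qed

lemma no_max: "a \<in> Field W \<Longrightarrow> \<exists>b \<in> Field W. wo_less W a b"
  using infinite_Card_order_limit[OF W_co W_inf] unfolding wo_less_def by blast

lemma succ_exists: assumes "wo_less W a c" shows "\<exists>b. wo_is_succ W a b \<and> (b,c) \<in> W"
proof -
  let ?S = "{b. wo_less W a b}"
  have a: "a \<in> Field W" using assms unfolding wo_less_def Field_def by auto
  have "?S \<subseteq> Field W" unfolding wo_less_def Field_def by auto
  moreover have "?S \<noteq> {}" using assms by blast
  ultimately obtain m where m: "m \<in> ?S" "\<forall>c\<in>?S. (m,c) \<in> W" using wo_min[OF W_wo] by blast
  thus ?thesis using a assms unfolding wo_is_succ_def by auto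
qed

lemma succ_exists2: assumes "a \<in> Field W" shows "\<exists>b. wo_is_succ W a b"
  using no_max[OF assms] succ_exists by blast

lemma underS_iff: "b \<in> underS W a \<longleftrightarrow> wo_less W b a"
  unfolding underS_def wo_less_def by auto

lemma wl_field: "wo_less W a b \<Longrightarrow> a \<in> Field W \<and> b \<in> Field W"
  unfolding wo_less_def Field_def by auto

lemma wl_trans: "wo_less W a b \<Longrightarrow> wo_less W b c \<Longrightarrow> wo_less W a c"
  using wo_rel.TRANS[OF W_worel] wo_rel.ANTISYM[OF W_worel] unfolding wo_less_def trans_def antisym_def by blast

lemma wl_trans2: "wo_less W a b \<Longrightarrow> (b, c) \<in> W \<Longrightarrow> wo_less W a c"
  using wo_rel.TRANS[OF W_worel] wo_rel.ANTISYM[OF W_worel] unfolding wo_less_def trans_def antisym_def by blast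

lemma wl_total: "a \<in> Field W \<Longrightarrow> b \<in> Field W \<Longrightarrow> a = b \<or> wo_less W a b \<or> wo_less W b a"
  using wo_rel.TOTALS[OF W_worel] unfolding wo_less_def by blast

lemma wl_asym: "wo_less W a b \<Longrightarrow> (b, a) \<in> W \<Longrightarrow> False"
  using wo_rel.ANTISYM[OF W_worel] unfolding wo_less_def antisym_def by blast

end



locale fwd = thm3 kappa V E f for kappa :: "'k rel" and V :: "'a set" and E and f :: "'a \<Rightarrow> 'b set" +
  fixes F :: "'a set set" and vv :: "'k set \<Rightarrow> 'a"
  assumes perf: "is_perfect_f_factor V E f F" and vv: "vv ` Field (cardSuc kappa) = V"
begin

definition low where "low x \<longleftrightarrow> |f x| \<le>o kappa"
definition pick where "pick S x = (SOME y. {x,y} \<in> F \<and> y \<notin> S)"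
definition fresh where "fresh S = (SOME T. T \<subseteq> V - S \<and> |T| =o kappa)"
definition opS where "opS S T = T \<union> (\<Union>x\<in>{x\<in>T. low x}. {y. {x,y} \<in> F}) \<union> pick S ` {x\<in>T. \<not> low x}"
definition base where "base S v = S \<union> {v} \<union> fresh S"
definition step where "step S v = (\<Union>n. (opS S ^^ n) (base S v))"
definition H where "H g a = (\<Union>b\<in>underS W a. step (g b) (vv b))"
definition AA where "AA = wo_rel.worec W H"

lemma FE: "F \<subseteq> E" using perf unfolding is_perfect_f_factor_def is_f_factor_def by blast
lemma degF: "x \<in> V \<Longrightarrow> |edges_at F x| =o |f x|" using perf unfolding is_perfect_f_factor_def by blast
lemma degF_le: "x \<in> V \<Longrightarrow> |edges_at F x| \<le>o |f x|" using perf unfolding is_perfect_f_factor_def is_f_factor_def by blast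

lemma pick_spec: assumes x: "x \<in> V" "\<not> low x" and S: "|S| \<le>o kappa"
  shows "{x, pick S x} \<in> F \<and> pick S x \<notin> S"
proof -
  have "\<exists>y. {x,y} \<in> F \<and> y \<notin> S"
  proof (rule ccontr)
    assume "\<not> ?thesis"
    hence "{y. {x,y} \<in> F} \<subseteq> S" by blast
    hence "edges_at F x \<subseteq> (\<lambda>y. {x,y}) ` S" using edges_at_img[OF FE, of x] by (meson image_mono subset_trans)
    hence "|edges_at F x| \<le>o |(\<lambda>y. {x,y}) ` S|" by (rule card_of_mono1)
    hence "|edges_at F x| \<le>o |S|" using card_of_image ordLeq_transitive by blast
    hence 1: "|edges_at F x| \<le>o kappa" using S ordLeq_transitive by blast
    have "|f x| =o W" using x high_iff unfolding low_def by blast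
    hence "W =o |edges_at F x|" using degF[OF x(1)] ordIso_transitive ordIso_symmetric by blast
    hence "W \<le>o kappa" using 1 ordIso_ordLeq_trans by blast
    thus False using kW not_ordLess_ordLeq by blast
  qed
  thus ?thesis unfolding pick_def by (rule someI_ex)
qed

lemma fresh_spec: assumes S: "|S| \<le>o kappa" shows "fresh S \<subseteq> V - S \<and> |fresh S| =o kappa"
proof -
  have "\<not> |V - S| \<le>o kappa"
  proof
    assume "|V - S| \<le>o kappa"
    hence "|S \<union> (V - S)| \<le>o kappa" using le_kappa_Un S by blast
    moreover have "|V| \<le>o |S \<union> (V - S)|" by (rule card_of_mono1) blast
    ultimately have "|V| \<le>o kappa" using ordLeq_transitive by blast
    hence "W \<le>o kappa" using VW ordIso_ordLeq_trans ordIso_symmetric by blast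
    thus False using kW not_ordLess_ordLeq by blast
  qed
  hence "kappa <o |V - S|" using high_iff2 not_ordLeq_iff_ordLess[OF k_wo card_of_Well_order] by blast
  hence "|Field kappa| \<le>o |V - S|"
    using ordIso_ordLeq_trans[OF card_of_Field_ordIso[OF co] ordLess_imp_ordLeq] by blast
  then obtain g where g: "inj_on g (Field kappa)" "g ` Field kappa \<subseteq> V - S"
    using card_of_ordLeq[of "Field kappa" "V - S"] by blast
  have "|g ` Field kappa| =o |Field kappa|"
    using card_of_ordIsoI[OF inj_on_imp_bij_betw[OF g(1)]] ordIso_symmetric by blast
  hence "|g ` Field kappa| =o kappa" using card_of_Field_ordIso[OF co] ordIso_transitive by blast
  hence "\<exists>T. T \<subseteq> V - S \<and> |T| =o kappa" using g by blast
  thus ?thesis unfolding fresh_def by (rule someI_ex)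
qed

lemma nb_le: assumes "x \<in> V" "low x" shows "|{y. {x,y} \<in> F}| \<le>o kappa"
proof -
  have "|{y. {x,y} \<in> F}| \<le>o |edges_at F x|"
    by (rule card_of_ordLeqI[where f="\<lambda>y. {x,y}"]) (auto simp: inj_on_def doubleton_eq_iff edges_at_def)
  also have "|edges_at F x| \<le>o |f x|" using degF_le assms by blast
  also have "|f x| \<le>o kappa" using assms unfolding low_def by blast
  finally show ?thesis .
qed

lemma nb_V: "{x,y} \<in> F \<Longrightarrow> y \<in> V" using FE edge_sub by blast

lemma opS_le: assumes T: "T \<subseteq> V" "|T| \<le>o kappa" and S: "|S| \<le>o kappa"
  shows "opS S T \<subseteq> V \<and> |opS S T| \<le>o kappa"
proof
  have p: "\<And>x. x \<in> T \<Longrightarrow> \<not> low x \<Longrightarrow> pick S x \<in> V" using pick_spec S T nb_V by blast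
  show "opS S T \<subseteq> V" unfolding opS_def using T(1) p nb_V by blast
  have 1: "|\<Union>x\<in>{x\<in>T. low x}. {y. {x,y} \<in> F}| \<le>o kappa"
  proof (rule le_kappa_UN)
    show "|{x\<in>T. low x}| \<le>o kappa" using card_of_mono1[of "{x\<in>T. low x}" T] T(2) ordLeq_transitive by blast
    show "\<And>i. i \<in> {x \<in> T. low x} \<Longrightarrow> |{y. {i, y} \<in> F}| \<le>o kappa" using nb_le T(1) by blast
  qed
  have 2: "|pick S ` {x\<in>T. \<not> low x}| \<le>o kappa"
    using card_of_image[of "pick S" "{x\<in>T. \<not> low x}"] card_of_mono1[of "{x\<in>T. \<not> low x}" T] T(2) ordLeq_transitive by blast
  show "|opS S T| \<le>o kappa" unfolding opS_def using le_kappa_Un[OF le_kappa_Un[OF T(2) 1] 2] .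
qed

lemma opS_ext: "T \<subseteq> opS S T" unfolding opS_def by blast

lemma base_le: assumes "S \<subseteq> V" "|S| \<le>o kappa" "v \<in> V" shows "base S v \<subseteq> V \<and> |base S v| \<le>o kappa"
proof
  have fr: "fresh S \<subseteq> V - S" "|fresh S| =o kappa" using fresh_spec assms by blast+
  show "base S v \<subseteq> V" unfolding base_def using fr assms by blast
  have "|fresh S| \<le>o kappa" using fr ordIso_iff_ordLeq by blast
  thus "|base S v| \<le>o kappa" unfolding base_def using le_kappa_Un[OF le_kappa_Un[OF assms(2) singl_le_kappa]] by blast
qed

lemma iter_le: assumes "B \<subseteq> V" "|B| \<le>o kappa" "|S| \<le>o kappa"
  shows "(opS S ^^ n) B \<subseteq> V \<and> |(opS S ^^ n) B| \<le>o kappa"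
proof (induction n)
  case 0 thus ?case using assms by simp
next
  case (Suc n) thus ?case using opS_le assms(3) by simp
qed

lemma step_le: assumes "S \<subseteq> V" "|S| \<le>o kappa" "v \<in> V" shows "step S v \<subseteq> V \<and> |step S v| \<le>o kappa"
proof
  have b: "base S v \<subseteq> V" "|base S v| \<le>o kappa" using base_le assms by blast+
  show "step S v \<subseteq> V" unfolding step_def using iter_le[OF b assms(2)] by blast
  show "|step S v| \<le>o kappa" unfolding step_def
    using le_kappa_UN[OF nat_le_kappa, of "\<lambda>n. (opS S ^^ n) (base S v)"] iter_le[OF b assms(2)] by simp
qed

lemma base_step: "base S v \<subseteq> step S v"
proof -
  have "(opS S ^^ 0) (base S v) \<subseteq> step S v" unfolding step_def by blast
  thus ?thesis by simp
qed

lemma step_low: assumes "x \<in> step S v" "low x" "{x,y} \<in> F" shows "y \<in> step S v"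
proof -
  obtain n where "x \<in> (opS S ^^ n) (base S v)" using assms unfolding step_def by blast
  hence "y \<in> (opS S ^^ Suc n) (base S v)" using assms unfolding opS_def by auto
  thus ?thesis unfolding step_def by blast
qed

lemma step_pick: assumes "x \<in> step S v" "\<not> low x" shows "pick S x \<in> step S v"
proof -
  obtain n where "x \<in> (opS S ^^ n) (base S v)" using assms unfolding step_def by blast
  hence "pick S x \<in> (opS S ^^ Suc n) (base S v)" using assms unfolding opS_def by auto
  thus ?thesis unfolding step_def by blast
qed

lemma adm: "wo_rel.adm_wo W H"
  unfolding wo_rel.adm_wo_def[OF W_worel] H_def by auto

lemma AA_eq: "AA a = (\<Union>b\<in>underS W a. step (AA b) (vv b))"
proof -
  have "AA = H AA" unfolding AA_def using wo_rel.worec_fixpoint[OF W_worel adm] .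
  thus ?thesis by (metis H_def)
qed

end



context fwd begin

lemma AA_le: "AA a \<subseteq> V \<and> |AA a| \<le>o kappa"
proof (induction a rule: wo_rel.well_order_induct[OF W_worel])
  case (1 x)
  have IH: "\<And>b. b \<in> underS W x \<Longrightarrow> AA b \<subseteq> V \<and> |AA b| \<le>o kappa" using 1 unfolding underS_def by blast
  have vb: "vv b \<in> V" if "b \<in> underS W x" for b
  proof -
    have "b \<in> Field W" using that Order_Relation.underS_Field[of W x] by blast
    thus ?thesis using vv by blast
  qed
  have st: "step (AA b) (vv b) \<subseteq> V \<and> |step (AA b) (vv b)| \<le>o kappa" if "b \<in> underS W x" for b
    using step_le[of "AA b" "vv b"] IH[OF that] vb[OF that] by blast
  show ?case
  proof
    show "AA x \<subseteq> V" unfolding AA_eq[of x] using st by blast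
    show "|AA x| \<le>o kappa" unfolding AA_eq[of x] using le_kappa_UN[OF underS_le, of x "\<lambda>b. step (AA b) (vv b)"] st by blast
  qed
qed

lemma AA_mono: assumes "wo_less W a b" shows "AA a \<subseteq> AA b"
proof -
  have "underS W a \<subseteq> underS W b" using assms by (auto simp: underS_iff intro: wl_trans)
  thus ?thesis using AA_eq[of a] AA_eq[of b] by blast
qed

lemma AA_zero: assumes "wo_is_zero W z" shows "AA z = {}"
proof -
  have "underS W z = {}"
  proof (rule ccontr)
    assume "underS W z \<noteq> {}"
    then obtain c where "wo_less W c z" by (auto simp: underS_iff)
    moreover have "(z, c) \<in> W" using assms calculation wl_field unfolding wo_is_zero_def by blast
    ultimately show False using wl_asym by blast
  qed
  thus ?thesis using AA_eq[of z] by simp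
qed

lemma base_AA: "S \<subseteq> step S v" using base_step unfolding base_def by blast

lemma AA_succ: assumes "wo_is_succ W a b" shows "AA b = step (AA a) (vv a)"
proof -
  have ab: "wo_less W a b" "a \<in> Field W" and bl: "\<And>c. wo_less W a c \<Longrightarrow> (b,c) \<in> W"
    using assms unfolding wo_is_succ_def by auto
  have "underS W b = insert a (underS W a)"
  proof
    show "insert a (underS W a) \<subseteq> underS W b" using ab by (auto simp: underS_iff intro: wl_trans)
    show "underS W b \<subseteq> insert a (underS W a)"
    proof
      fix c assume "c \<in> underS W b"
      hence c: "wo_less W c b" by (simp add: underS_iff)
      hence "c \<in> Field W" using wl_field by blast
      then consider "c = a" | "wo_less W a c" | "wo_less W c a" using wl_total ab(2) by blast
      thus "c \<in> insert a (underS W a)"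
      proof cases
        case 2 thus ?thesis using bl c wl_asym by blast
      qed (auto simp: underS_iff)
    qed
  qed
  hence "AA b = step (AA a) (vv a) \<union> (\<Union>c\<in>underS W a. step (AA c) (vv c))" using AA_eq[of b] by simp
  also have "\<dots> = step (AA a) (vv a) \<union> AA a" using AA_eq[of a] by simp
  also have "\<dots> = step (AA a) (vv a)" using base_AA by blast
  finally show ?thesis .
qed

lemma AA_limit: assumes "wo_is_limit W l" shows "AA l = (\<Union>a\<in>{a. wo_less W a l}. AA a)"
proof
  show "(\<Union>a\<in>{a. wo_less W a l}. AA a) \<subseteq> AA l" using AA_mono by blast
  show "AA l \<subseteq> (\<Union>a\<in>{a. wo_less W a l}. AA a)"
  proof
    fix x assume "x \<in> AA l"
    then obtain c where c: "wo_less W c l" "x \<in> step (AA c) (vv c)" using AA_eq[of l] by (auto simp: underS_iff)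
    obtain b where b: "wo_is_succ W c b" "(b, l) \<in> W" using succ_exists[OF c(1)] by blast
    have "b \<noteq> l" using assms b(1) unfolding wo_is_limit_def by blast
    hence "wo_less W b l" using b(2) unfolding wo_less_def by blast
    moreover have "x \<in> AA b" using AA_succ[OF b(1)] base_AA c(2) by blast
    ultimately show "x \<in> (\<Union>a\<in>{a. wo_less W a l}. AA a)" by blast
  qed
qed

lemma AA_V: "V = (\<Union>a\<in>Field W. AA a)"
proof
  show "(\<Union>a\<in>Field W. AA a) \<subseteq> V" using AA_le by blast
  show "V \<subseteq> (\<Union>a\<in>Field W. AA a)"
  proof
    fix x assume "x \<in> V"
    then obtain c where c: "c \<in> Field W" "x = vv c" using vv by blast
    obtain b where b: "wo_is_succ W c b" using succ_exists2[OF c(1)] by blast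
    have "b \<in> Field W" using b wl_field unfolding wo_is_succ_def by blast
    moreover have "x \<in> AA b" using AA_succ[OF b] base_step c(2) unfolding base_def by blast
    ultimately show "x \<in> (\<Union>a\<in>Field W. AA a)" by blast
  qed
qed

lemma AA_diff: assumes "wo_is_succ W a b" shows "|AA b - AA a| =o kappa"
proof -
  have le: "|AA a| \<le>o kappa" using AA_le by blast
  have fr: "fresh (AA a) \<subseteq> V - AA a" "|fresh (AA a)| =o kappa" using fresh_spec[OF le] by blast+
  have "fresh (AA a) \<subseteq> AA b - AA a" using fr AA_succ[OF assms] base_step[of "AA a" "vv a"] unfolding base_def by blast
  hence "|fresh (AA a)| \<le>o |AA b - AA a|" by (rule card_of_mono1)
  hence 1: "kappa \<le>o |AA b - AA a|" using ordIso_ordLeq_trans[OF ordIso_symmetric[OF fr(2)]] by blast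
  have "|AA b - AA a| \<le>o |AA b|" by (rule card_of_mono1) blast
  hence "|AA b - AA a| \<le>o kappa" using AA_le[of b] ordLeq_transitive by blast
  thus ?thesis using 1 ordIso_iff_ordLeq by blast
qed

lemma AA_low: assumes "x \<in> AA c" "low x" "{x,y} \<in> F" shows "y \<in> AA c"
proof -
  obtain b where "b \<in> underS W c" "x \<in> step (AA b) (vv b)" using assms(1) AA_eq[of c] by blast
  thus ?thesis using step_low[OF _ assms(2,3)] AA_eq[of c] by blast
qed

end



context fwd begin

lemma AA_factor:
  assumes ab: "wo_is_succ W a b"
  defines "B \<equiv> AA b - (AA a - {x. |f x| =o W})"
  defines "Es \<equiv> {e \<in> E. \<exists>x y. e = {x, y} \<and> x \<in> B \<and> y \<in> AA b - AA a}"
  shows "is_kappa_perfect_f_factor kappa B Es f {e \<in> F. e \<in> Es}"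
proof -
  let ?F' = "{e \<in> F. e \<in> Es}"
  have BV: "B \<subseteq> V" using AA_le[of b] unfolding B_def by blast
  have Sle: "|AA a| \<le>o kappa" using AA_le by blast
  have sub: "edges_at ?F' x \<subseteq> edges_at F x" for x unfolding edges_at_def by blast
  have fac: "is_f_factor B Es f ?F'"
    unfolding is_f_factor_def
  proof
    show "?F' \<subseteq> Es" by blast
    show "\<forall>x\<in>B. |edges_at ?F' x| \<le>o |f x|"
    proof
      fix x assume "x \<in> B"
      hence "|edges_at F x| \<le>o |f x|" using degF_le BV by blast
      thus "|edges_at ?F' x| \<le>o |f x|" using card_of_mono1[OF sub[of x]] ordLeq_transitive by blast
    qed
  qed
  have lowp: "|edges_at ?F' x| =o |f x|" if x: "x \<in> B" "|f x| \<le>o kappa" for x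
  proof -
    have xV: "x \<in> V" using x BV by blast
    have lx: "low x" using x unfolding low_def by blast
    have "x \<notin> {x. |f x| =o W}" using high_iff[OF xV] x(2) by blast
    hence xN: "x \<in> AA b - AA a" using x(1) unfolding B_def by blast
    have "edges_at F x \<subseteq> edges_at ?F' x"
    proof
      fix e assume e: "e \<in> edges_at F x"
      then obtain y where y: "e = {x,y}" "{x,y} \<in> F" using edges_at_img[OF FE, of x] by blast
      have yb: "y \<in> AA b" using AA_low[OF _ lx y(2)] xN by blast
      have yV: "y \<in> V" using nb_V y(2) by blast
      have "y \<in> B"
      proof (cases "y \<in> AA a")
        case True
        have "\<not> low y"
        proof
          assume "low y"
          moreover have "{y,x} \<in> F" using y(2) by (simp add: insert_commute)
          ultimately have "x \<in> AA a" using AA_low[OF True] by blast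
          thus False using xN by blast
        qed
        hence "|f y| =o W" using high_iff[OF yV] unfolding low_def by blast
        thus ?thesis using yb unfolding B_def by blast
      next
        case False thus ?thesis using yb unfolding B_def by blast
      qed
      hence "e \<in> Es" unfolding Es_def using y FE xN by (auto simp: insert_commute)
      thus "e \<in> edges_at ?F' x" using e unfolding edges_at_def by blast
    qed
    hence "edges_at ?F' x = edges_at F x" using sub by blast
    thus ?thesis using degF[OF xV] by simp
  qed
  have highp: "edges_at ?F' x \<noteq> {}" if x: "x \<in> B" "kappa <o |f x|" for x
  proof -
    have xV: "x \<in> V" using x BV by blast
    have lx: "\<not> low x" using x high_iff2 unfolding low_def by blast
    have xb: "x \<in> AA b" using x(1) unfolding B_def by blast
    hence xs: "x \<in> step (AA a) (vv a)" using AA_succ[OF ab] by simp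
    have p: "{x, pick (AA a) x} \<in> F" "pick (AA a) x \<notin> AA a" using pick_spec[OF xV lx Sle] by blast+
    have "pick (AA a) x \<in> AA b" using step_pick[OF xs lx] AA_succ[OF ab] by simp
    hence "{x, pick (AA a) x} \<in> Es" unfolding Es_def using p x(1) FE by blast
    hence "{x, pick (AA a) x} \<in> edges_at ?F' x" using p unfolding edges_at_def by blast
    thus ?thesis by blast
  qed
  show ?thesis unfolding is_kappa_perfect_f_factor_def using fac lowp highp by blast
qed

lemma fwd_main:
  "\<exists>A :: 'k set \<Rightarrow> 'a set.
       increasing_continuous (cardSuc kappa) A \<and>
       (\<forall>a\<in>Field (cardSuc kappa). A a \<subseteq> V) \<and>
       (\<forall>z. wo_is_zero (cardSuc kappa) z \<longrightarrow> A z = {}) \<and>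
       V = (\<Union>a\<in>Field (cardSuc kappa). A a) \<and>
       (\<forall>a b. wo_is_succ (cardSuc kappa) a b \<longrightarrow> |A b - A a| =o kappa) \<and>
       (\<forall>a b. wo_is_succ (cardSuc kappa) a b \<longrightarrow>
          (let B = A b - (A a - {x. |f x| =o cardSuc kappa}) in
           \<exists>F. is_kappa_perfect_f_factor kappa B
                 {e \<in> E. \<exists>x y. e = {x, y} \<and> x \<in> B \<and> y \<in> A b - A a} f F))"
proof (rule exI[where x=AA], intro conjI allI impI ballI)
  show "increasing_continuous W AA" unfolding increasing_continuous_def using AA_mono AA_limit by blast
  show "\<And>a. a \<in> Field W \<Longrightarrow> AA a \<subseteq> V" using AA_le by blast
  show "\<And>z. wo_is_zero W z \<Longrightarrow> AA z = {}" using AA_zero by blast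
  show "V = (\<Union>a\<in>Field W. AA a)" by (rule AA_V)
  show "\<And>a b. wo_is_succ W a b \<Longrightarrow> |AA b - AA a| =o kappa" using AA_diff by blast
  fix a b assume "wo_is_succ W a b"
  thus "let B = AA b - (AA a - {x. |f x| =o W}) in
           \<exists>F. is_kappa_perfect_f_factor kappa B
                 {e \<in> E. \<exists>x y. e = {x, y} \<and> x \<in> B \<and> y \<in> AA b - AA a} f F"
    unfolding Let_def using AA_factor by blast
qed

end



locale bwd = thm3 kappa V E f for kappa :: "'k rel" and V :: "'a set" and E and f :: "'a \<Rightarrow> 'b set" +
  fixes A :: "'k set \<Rightarrow> 'a set"
  assumes ic: "increasing_continuous (cardSuc kappa) A"
    and AV: "\<forall>a\<in>Field (cardSuc kappa). A a \<subseteq> V"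
    and Az: "\<forall>z. wo_is_zero (cardSuc kappa) z \<longrightarrow> A z = {}"
    and AU: "V = (\<Union>a\<in>Field (cardSuc kappa). A a)"
    and Afac: "\<forall>a b. wo_is_succ (cardSuc kappa) a b \<longrightarrow>
          (let B = A b - (A a - {x. |f x| =o cardSuc kappa}) in
           \<exists>F. is_kappa_perfect_f_factor kappa B
                 {e \<in> E. \<exists>x y. e = {x, y} \<and> x \<in> B \<and> y \<in> A b - A a} f F)"
begin

definition "K = {x. |f x| =o W}"
definition "Bs a b = A b - (A a - K)"
definition "Es a b = {e \<in> E. \<exists>x y. e = {x, y} \<and> x \<in> Bs a b \<and> y \<in> A b - A a}"
definition "FF a b = (SOME F. is_kappa_perfect_f_factor kappa (Bs a b) (Es a b) f F)"
definition "G = (\<Union>(a,b)\<in>{(a,b). wo_is_succ W a b}. FF a b)"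

lemma FF_spec: assumes "wo_is_succ W a b" shows "is_kappa_perfect_f_factor kappa (Bs a b) (Es a b) f (FF a b)"
proof -
  have "\<exists>F. is_kappa_perfect_f_factor kappa (Bs a b) (Es a b) f F"
    using Afac assms unfolding Let_def Bs_def Es_def K_def by blast
  thus ?thesis unfolding FF_def by (rule someI_ex)
qed

lemma FF_Es: "wo_is_succ W a b \<Longrightarrow> FF a b \<subseteq> Es a b"
  using FF_spec unfolding is_kappa_perfect_f_factor_def is_f_factor_def by blast

lemma GE: "G \<subseteq> E"
proof
  fix e assume "e \<in> G"
  then obtain a b where "wo_is_succ W a b" "e \<in> FF a b" unfolding G_def by blast
  thus "e \<in> E" using FF_Es unfolding Es_def by blast
qed

lemma A_mono: "wo_less W a b \<Longrightarrow> A a \<subseteq> A b" using ic unfolding increasing_continuous_def by blast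
lemma A_mono2: "(a, b) \<in> W \<Longrightarrow> A a \<subseteq> A b" using A_mono unfolding wo_less_def by (cases "a = b") auto

lemma succ_unique: assumes "wo_is_succ W a b" "wo_is_succ W a b'" shows "b = b'"
proof -
  have "(b,b') \<in> W" "(b',b) \<in> W" using assms unfolding wo_is_succ_def by blast+
  thus ?thesis using wo_rel.ANTISYM[OF W_worel] unfolding antisym_def by blast
qed

lemma entry: assumes "x \<in> V" shows "\<exists>a b. wo_is_succ W a b \<and> x \<in> A b \<and> x \<notin> A a"
proof -
  let ?S = "{c \<in> Field W. x \<in> A c}"
  have "?S \<noteq> {}" using assms AU by blast
  then obtain m where m: "m \<in> ?S" "\<forall>c\<in>?S. (m,c) \<in> W" using wo_min[OF W_wo, of ?S] by blast
  have nz: "\<not> wo_is_zero W m" using m(1) Az by auto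
  have nl: "\<not> wo_is_limit W m"
  proof
    assume l: "wo_is_limit W m"
    hence "A m = (\<Union>a\<in>{a. wo_less W a m}. A a)" using ic unfolding increasing_continuous_def by blast
    then obtain c where c: "wo_less W c m" "x \<in> A c" using m(1) by blast
    hence "c \<in> ?S" using wl_field by blast
    thus False using m(2) c(1) wl_asym by blast
  qed
  then obtain a where a: "wo_is_succ W a m" using nz m(1) unfolding wo_is_limit_def by blast
  have "x \<notin> A a"
  proof
    assume "x \<in> A a"
    hence "a \<in> ?S" using a unfolding wo_is_succ_def by blast
    thus False using m(2) a wl_asym unfolding wo_is_succ_def by blast
  qed
  thus ?thesis using a m(1) by blast
qed

lemma Es_form: assumes "e \<in> Es a b" obtains u w where "e = {u,w}" "u \<in> Bs a b" "w \<in> A b - A a"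
  using assms unfolding Es_def by blast

lemma edge_loc:
  assumes ab: "wo_is_succ W a b" and x: "x \<in> A b" "x \<notin> A a"
    and ab': "wo_is_succ W a' b'" and e: "e \<in> FF a' b'" "x \<in> e"
  shows "(a' = a \<and> b' = b) \<or> (x \<in> K \<and> wo_less W a a' \<and> x \<in> A a')"
proof -
  obtain u w where uw: "e = {u,w}" "u \<in> Bs a' b'" "w \<in> A b' - A a'" using FF_Es[OF ab'] e(1) Es_form by blast
  have "x \<in> A b'" using uw e(2) unfolding Bs_def by blast
  have fa: "a \<in> Field W" "a' \<in> Field W" using ab ab' unfolding wo_is_succ_def by blast+
  consider "a = a'" | "wo_less W a' a" | "wo_less W a a'" using wl_total[OF fa] by blast
  thus ?thesis
  proof cases
    case 1 thus ?thesis using succ_unique ab ab' by blast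
  next
    case 2
    hence "(b', a) \<in> W" using ab' unfolding wo_is_succ_def by blast
    hence "A b' \<subseteq> A a" by (rule A_mono2)
    thus ?thesis using \<open>x \<in> A b'\<close> x by blast
  next
    case 3
    hence "(b, a') \<in> W" using ab unfolding wo_is_succ_def by blast
    hence xa: "x \<in> A a'" using A_mono2 x by blast
    hence "x = u" using uw e(2) by blast
    hence "x \<in> K" using uw xa unfolding Bs_def by blast
    thus ?thesis using 3 xa by blast
  qed
qed

lemma edges_G: "e \<in> edges_at G x \<longleftrightarrow> (\<exists>a b. wo_is_succ W a b \<and> e \<in> edges_at (FF a b) x)"
  unfolding G_def edges_at_def by blast

lemma low_deg: assumes xV: "x \<in> V" and lo: "|f x| \<le>o kappa" shows "|edges_at G x| =o |f x|"
proof -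
  obtain a b where ab: "wo_is_succ W a b" "x \<in> A b" "x \<notin> A a" using entry[OF xV] by blast
  have xK: "x \<notin> K" using high_iff[OF xV] lo unfolding K_def by blast
  have "edges_at G x = edges_at (FF a b) x"
  proof
    show "edges_at (FF a b) x \<subseteq> edges_at G x" using edges_G ab(1) by blast
    show "edges_at G x \<subseteq> edges_at (FF a b) x"
    proof
      fix e assume "e \<in> edges_at G x"
      then obtain a' b' where e: "wo_is_succ W a' b'" "e \<in> FF a' b'" "x \<in> e" using edges_G unfolding edges_at_def by blast
      hence "a' = a \<and> b' = b" using edge_loc[OF ab e] xK by blast
      thus "e \<in> edges_at (FF a b) x" using e unfolding edges_at_def by blast
    qed
  qed
  moreover have "x \<in> Bs a b" using ab unfolding Bs_def by blast
  ultimately show ?thesis using FF_spec[OF ab(1)] lo unfolding is_kappa_perfect_f_factor_def by simp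
qed

end



context bwd begin

lemma above_big: assumes "a \<in> Field W" shows "W \<le>o |{c. wo_less W a c}|"
proof -
  let ?U = "{c. wo_less W a c}"
  have "\<not> |?U| \<le>o kappa"
  proof
    assume U: "|?U| \<le>o kappa"
    have "Field W \<subseteq> ({a} \<union> underS W a) \<union> ?U"
    proof
      fix c assume "c \<in> Field W"
      thus "c \<in> ({a} \<union> underS W a) \<union> ?U" using wl_total[OF assms, of c] by (auto simp: underS_iff)
    qed
    hence "|Field W| \<le>o |({a} \<union> underS W a) \<union> ?U|" by (rule card_of_mono1)
    moreover have "|({a} \<union> underS W a) \<union> ?U| \<le>o kappa"
      using le_kappa_Un[OF le_kappa_Un[OF singl_le_kappa underS_le] U] .
    ultimately have "|Field W| \<le>o kappa" using ordLeq_transitive by blast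
    hence "W \<le>o kappa" using ordIso_ordLeq_trans[OF ordIso_symmetric[OF card_of_Field_ordIso[OF W_co]]] by blast
    thus False using kW not_ordLess_ordLeq by blast
  qed
  hence "kappa <o |?U|" using high_iff2 not_ordLeq_iff_ordLess[OF k_wo card_of_Well_order] by blast
  thus ?thesis using cardSuc_ordLess_ordLeq[OF co card_of_Card_order] by blast
qed

lemma high_deg: assumes xV: "x \<in> V" and hi: "\<not> |f x| \<le>o kappa" shows "|edges_at G x| =o |f x|"
proof -
  obtain a b where ab: "wo_is_succ W a b" "x \<in> A b" "x \<notin> A a" using entry[OF xV] by blast
  have fW: "|f x| =o W" using high_iff[OF xV] hi by blast
  hence xK: "x \<in> K" unfolding K_def by blast
  have kf: "kappa <o |f x|" using hi high_iff2 by blast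
  define sc where "sc c = (SOME d. wo_is_succ W c d)" for c
  let ?U = "{c. wo_less W a c}"
  have sc: "wo_is_succ W c (sc c)" if "c \<in> ?U" for c
  proof -
    have "c \<in> Field W" using that wl_field by blast
    thus ?thesis unfolding sc_def using succ_exists2 someI_ex by metis
  qed
  have xB: "x \<in> Bs c (sc c)" if "c \<in> ?U" for c
  proof -
    have "(b, c) \<in> W" using ab(1) that unfolding wo_is_succ_def by blast
    hence "x \<in> A c" using A_mono2 ab(2) by blast
    moreover have "wo_less W c (sc c)" using sc[OF that] unfolding wo_is_succ_def by blast
    ultimately have "x \<in> A (sc c)" using A_mono by blast
    thus ?thesis using xK unfolding Bs_def by blast
  qed
  have ne: "edges_at (FF c (sc c)) x \<noteq> {}" if "c \<in> ?U" for c
    using FF_spec[OF sc[OF that]] xB[OF that] kf unfolding is_kappa_perfect_f_factor_def by blast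
  define ee where "ee c = (SOME e. e \<in> edges_at (FF c (sc c)) x)" for c
  have ee: "ee c \<in> edges_at (FF c (sc c)) x" if "c \<in> ?U" for c
    using ne[OF that] unfolding ee_def by (meson equals0I someI_ex)
  have eeG: "ee c \<in> edges_at G x" if "c \<in> ?U" for c
    using ee[OF that] sc[OF that] edges_G by blast
  have neq: "ee c1 \<noteq> ee c2" if c: "c1 \<in> ?U" "c2 \<in> ?U" "wo_less W c1 c2" for c1 c2
  proof -
    have e1: "ee c1 \<in> Es c1 (sc c1)" using ee[OF c(1)] FF_Es[OF sc[OF c(1)]] unfolding edges_at_def by blast
    have "(sc c1, c2) \<in> W" using sc[OF c(1)] c(3) unfolding wo_is_succ_def by blast
    hence "A (sc c1) \<subseteq> A c2" by (rule A_mono2)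
    moreover have "ee c1 \<subseteq> A (sc c1)" using e1 Es_form[OF e1] unfolding Bs_def by (metis Diff_iff empty_subsetI insert_subset)
    ultimately have 1: "ee c1 \<subseteq> A c2" by blast
    have e2: "ee c2 \<in> Es c2 (sc c2)" using ee[OF c(2)] FF_Es[OF sc[OF c(2)]] unfolding edges_at_def by blast
    obtain u w where "ee c2 = {u,w}" "w \<in> A (sc c2) - A c2" using Es_form[OF e2] by blast
    hence "\<not> ee c2 \<subseteq> A c2" by blast
    thus ?thesis using 1 by metis
  qed
  have "inj_on ee ?U"
  proof (rule inj_onI)
    fix c1 c2 assume c: "c1 \<in> ?U" "c2 \<in> ?U" "ee c1 = ee c2"
    have "c1 \<in> Field W" "c2 \<in> Field W" using c wl_field by blast+
    thus "c1 = c2" using wl_total neq c by metis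
  qed
  hence "|?U| \<le>o |edges_at G x|" using card_of_ordLeqI[of ee ?U "edges_at G x"] eeG by blast
  hence lo: "W \<le>o |edges_at G x|" using above_big ab(1) ordLeq_transitive unfolding wo_is_succ_def by blast
  have up: "|edges_at G x| \<le>o W" using edges_at_W[OF GE] .
  have "|edges_at G x| =o W" using lo up ordIso_iff_ordLeq by blast
  thus ?thesis using fW ordIso_transitive ordIso_symmetric by blast
qed

lemma bwd_main: "\<exists>F. is_perfect_f_factor V E f F"
proof (rule exI[where x=G])
  have d: "|edges_at G x| =o |f x|" if "x \<in> V" for x
    using low_deg high_deg that by blast
  show "is_perfect_f_factor V E f G"
    unfolding is_perfect_f_factor_def is_f_factor_def using GE d ordIso_iff_ordLeq by blast
qed

end

theorem theorem3:
  fixes kappa :: "'k rel" and V :: "'a set" and E :: "'a set set" and f :: "'a \<Rightarrow> 'b set"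
  assumes "Card_order kappa" and "\<not> finite (Field kappa)"
    and "in_class_C V E f"
    and "|V| =o cardSuc kappa"
  shows "(\<exists>F. is_perfect_f_factor V E f F) \<longleftrightarrow>
    (\<exists>A :: 'k set \<Rightarrow> 'a set.
       increasing_continuous (cardSuc kappa) A \<and>
       (\<forall>a\<in>Field (cardSuc kappa). A a \<subseteq> V) \<and>
       (\<forall>z. wo_is_zero (cardSuc kappa) z \<longrightarrow> A z = {}) \<and>
       V = (\<Union>a\<in>Field (cardSuc kappa). A a) \<and>
       (\<forall>a b. wo_is_succ (cardSuc kappa) a b \<longrightarrow> |A b - A a| =o kappa) \<and>
       (\<forall>a b. wo_is_succ (cardSuc kappa) a b \<longrightarrow>
          (let B = A b - (A a - {x. |f x| =o cardSuc kappa}) in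
           \<exists>F. is_kappa_perfect_f_factor kappa B
                 {e \<in> E. \<exists>x y. e = {x, y} \<and> x \<in> B \<and> y \<in> A b - A a} f F)))"
proof -
  interpret thm3 kappa V E f using assms by unfold_locales
  show ?thesis
  proof
    assume "\<exists>F. is_perfect_f_factor V E f F"
    then obtain F where F: "is_perfect_f_factor V E f F" by blast
    have "|Field W| =o |V|" using ordIso_transitive[OF card_of_Field_ordIso[OF W_co] ordIso_symmetric[OF VW]] .
    then obtain vv where "bij_betw vv (Field W) V" using card_of_ordIso by blast
    hence vv: "vv ` Field W = V" unfolding bij_betw_def by blast
    interpret fwd kappa V E f F vv using F vv by unfold_locales
    show "\<exists>A :: 'k set \<Rightarrow> 'a set.
       increasing_continuous (cardSuc kappa) A \<and>
       (\<forall>a\<in>Field (cardSuc kappa). A a \<subseteq> V) \<and>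
       (\<forall>z. wo_is_zero (cardSuc kappa) z \<longrightarrow> A z = {}) \<and>
       V = (\<Union>a\<in>Field (cardSuc kappa). A a) \<and>
       (\<forall>a b. wo_is_succ (cardSuc kappa) a b \<longrightarrow> |A b - A a| =o kappa) \<and>
       (\<forall>a b. wo_is_succ (cardSuc kappa) a b \<longrightarrow>
          (let B = A b - (A a - {x. |f x| =o cardSuc kappa}) in
           \<exists>F. is_kappa_perfect_f_factor kappa B
                 {e \<in> E. \<exists>x y. e = {x, y} \<and> x \<in> B \<and> y \<in> A b - A a} f F))"
      by (rule fwd_main)
  next
    assume "\<exists>A :: 'k set \<Rightarrow> 'a set.
       increasing_continuous (cardSuc kappa) A \<and>
       (\<forall>a\<in>Field (cardSuc kappa). A a \<subseteq> V) \<and>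
       (\<forall>z. wo_is_zero (cardSuc kappa) z \<longrightarrow> A z = {}) \<and>
       V = (\<Union>a\<in>Field (cardSuc kappa). A a) \<and>
       (\<forall>a b. wo_is_succ (cardSuc kappa) a b \<longrightarrow> |A b - A a| =o kappa) \<and>
       (\<forall>a b. wo_is_succ (cardSuc kappa) a b \<longrightarrow>
          (let B = A b - (A a - {x. |f x| =o cardSuc kappa}) in
           \<exists>F. is_kappa_perfect_f_factor kappa B
                 {e \<in> E. \<exists>x y. e = {x, y} \<and> x \<in> B \<and> y \<in> A b - A a} f F))"
    then obtain A :: "'k set \<Rightarrow> 'a set" where A:
       "increasing_continuous (cardSuc kappa) A"
       "\<forall>a\<in>Field (cardSuc kappa). A a \<subseteq> V"
       "\<forall>z. wo_is_zero (cardSuc kappa) z \<longrightarrow> A z = {}"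
       "V = (\<Union>a\<in>Field (cardSuc kappa). A a)"
       "\<forall>a b. wo_is_succ (cardSuc kappa) a b \<longrightarrow>
          (let B = A b - (A a - {x. |f x| =o cardSuc kappa}) in
           \<exists>F. is_kappa_perfect_f_factor kappa B
                 {e \<in> E. \<exists>x y. e = {x, y} \<and> x \<in> B \<and> y \<in> A b - A a} f F)"
      by blast
    interpret bwd kappa V E f A using A by unfold_locales
    show "\<exists>F. is_perfect_f_factor V E f F" by (rule bwd_main)
  qed
qed

end
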